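(* Let $\Omega$ be a finite set, $n\ge1$, and $P_i,Q_i$ ($i=1,\dots,n$) strictly positive probability mass functions on $\Omega$. For a pair $(P,Q)$ of strictly positive probability mass functions on a finite set $\Sigma$, define its encoding $\eta_{P,Q}:=\sum_{s\in\Sigma}\sqrt{P(s)Q(s)}\,\delta_{\frac12\log\frac{P(s)}{Q(s)}}$ (a measure on $\mathbb R$, $\delta_u$ the Dirac mass at $u$), and let $\eta_i:=\eta_{P_i,Q_i}$. Define probability mass functions on $[n]\times\Omega$ by $\Lambda_P(i,\omega):=\frac1nP_i(\omega)$ and $\Lambda_Q(i,\omega):=\frac1nQ_i(\omega)$. Then the encoding $\eta_{\Lambda_P,\Lambda_Q}$ equals $\bar\eta:=\frac1n\sum_{i=1}^n\eta_i$, and consequently \[ T(\bar\eta^{*n})=\mathrm{TV}(\Lambda_P^{\otimes n},\Lambda_Q^{\otimes n}), \] where $T(\eta):=\frac12\int_{\mathbb R}|e^x-e^{-x}|\,\eta(dx)$.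
   Context: $\bar\eta^{*n}$ is the $n$-fold convolution of $\bar\eta$ with itself. $[n]=\{1,\dots,n\}$. For probability measures on a finite set, $\mathrm{TV}(\mu,\nu)=\frac12\sum|\mu(\cdot)-\nu(\cdot)|$. *)

theory Defs
  imports Complex_Main "HOL-Library.FuncSet"
begin

text \<open>Finitely supported (signed) measures on the real line are represented by their
  weight functions \<open>real \<Rightarrow> real\<close>: the measure is \<open>\<Sum>x. w x \<cdot> \<delta>_x\<close>.\<close>

definition strictly_pos_pmf :: "'a set \<Rightarrow> ('a \<Rightarrow> real) \<Rightarrow> bool" where
  "strictly_pos_pmf S p \<longleftrightarrow> (\<forall>s\<in>S. p s > 0) \<and> sum p S = 1"

definition encoding :: "'a set \<Rightarrow> ('a \<Rightarrow> real) \<Rightarrow> ('a \<Rightarrow> real) \<Rightarrow> real \<Rightarrow> real" where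
  "encoding S P Q = (\<lambda>u. \<Sum>s\<in>{s\<in>S. ln (P s / Q s) / 2 = u}. sqrt (P s * Q s))"

definition wsupp :: "(real \<Rightarrow> real) \<Rightarrow> real set" where
  "wsupp \<mu> = {x. \<mu> x \<noteq> 0}"

definition conv :: "(real \<Rightarrow> real) \<Rightarrow> (real \<Rightarrow> real) \<Rightarrow> real \<Rightarrow> real" where
  "conv \<mu> \<nu> = (\<lambda>x. \<Sum>y\<in>wsupp \<mu>. \<mu> y * \<nu> (x - y))"

primrec conv_pow :: "(real \<Rightarrow> real) \<Rightarrow> nat \<Rightarrow> real \<Rightarrow> real" where
  "conv_pow \<mu> 0 = (\<lambda>x. if x = 0 then 1 else 0)"
| "conv_pow \<mu> (Suc k) = conv \<mu> (conv_pow \<mu> k)"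

definition T_fun :: "(real \<Rightarrow> real) \<Rightarrow> real" where
  "T_fun \<eta> = (1/2) * (\<Sum>x\<in>wsupp \<eta>. \<bar>exp x - exp (- x)\<bar> * \<eta> x)"

definition TV :: "'b set \<Rightarrow> ('b \<Rightarrow> real) \<Rightarrow> ('b \<Rightarrow> real) \<Rightarrow> real" where
  "TV S \<mu> \<nu> = (1/2) * (\<Sum>x\<in>S. \<bar>\<mu> x - \<nu> x\<bar>)"

definition prod_space :: "'b set \<Rightarrow> nat \<Rightarrow> (nat \<Rightarrow> 'b) set" where
  "prod_space S n = PiE {..<n} (\<lambda>_. S)"

definition prod_pmf_pow :: "('b \<Rightarrow> real) \<Rightarrow> nat \<Rightarrow> (nat \<Rightarrow> 'b) \<Rightarrow> real" where
  "prod_pmf_pow p n = (\<lambda>x. \<Prod>j<n. p (x j))"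

end

theory Submission
  imports Defs
begin

definition push :: "'b set \<Rightarrow> ('b \<Rightarrow> real) \<Rightarrow> ('b \<Rightarrow> real) \<Rightarrow> real \<Rightarrow> real" where
  "push A g w = (\<lambda>u. \<Sum>s\<in>A. if g s = u then w s else 0)"

lemma encoding_push: "finite S \<Longrightarrow> encoding S P Q = push S (\<lambda>s. ln (P s / Q s) / 2) (\<lambda>s. sqrt (P s * Q s))"
  unfolding encoding_def push_def by (auto simp: sum.inter_filter)

lemma wsupp_push: "wsupp (push A g w) \<subseteq> g ` A"
  unfolding wsupp_def push_def
proof
  fix x assume "x \<in> {x. (\<Sum>s\<in>A. if g s = x then w s else 0) \<noteq> 0}"
  then have "(\<Sum>s\<in>A. if g s = x then w s else 0) \<noteq> 0" by simp
  show "x \<in> g ` A"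
  proof (rule ccontr)
    assume "x \<notin> g ` A"
    then have "\<forall>s\<in>A. g s \<noteq> x" by auto
    then have "(\<Sum>s\<in>A. if g s = x then w s else 0) = 0" by simp
    with \<open>(\<Sum>s\<in>A. if g s = x then w s else 0) \<noteq> 0\<close> show False by simp
  qed
qed

lemma sum_push:
  assumes "finite A"
  shows "(\<Sum>x\<in>wsupp (push A g w). h x * push A g w x) = (\<Sum>s\<in>A. h (g s) * w s)"
proof -
  have "(\<Sum>x\<in>wsupp (push A g w). h x * push A g w x) = (\<Sum>x\<in>g ` A. h x * push A g w x)"
    using assms wsupp_push[of A g w]
    by (intro sum.mono_neutral_left) (auto simp: wsupp_def)
  also have "\<dots> = (\<Sum>x\<in>g ` A. \<Sum>s\<in>A. if g s = x then h (g s) * w s else 0)"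
    unfolding push_def by (auto simp: sum_distrib_left intro!: sum.cong)
  also have "\<dots> = (\<Sum>s\<in>A. \<Sum>x\<in>g ` A. if g s = x then h (g s) * w s else 0)"
    by (rule sum.swap)
  also have "\<dots> = (\<Sum>s\<in>A. h (g s) * w s)"
    using assms by (auto intro!: sum.cong simp: sum.delta)
  finally show ?thesis .
qed

lemma conv_push:
  assumes "finite A" "finite B"
  shows "conv (push A g w) (push B g' w') =
         push (A \<times> B) (\<lambda>(s,t). g s + g' t) (\<lambda>(s,t). w s * w' t)"
proof
  fix x
  have "conv (push A g w) (push B g' w') x = (\<Sum>y\<in>wsupp (push A g w). push B g' w' (x - y) * push A g w y)"
    unfolding conv_def by (simp add: mult.commute)
  also have "\<dots> = (\<Sum>s\<in>A. push B g' w' (x - g s) * w s)"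
    by (rule sum_push[OF assms(1)])
  also have "\<dots> = (\<Sum>s\<in>A. \<Sum>t\<in>B. if g s + g' t = x then w s * w' t else 0)"
    unfolding push_def by (auto simp: sum_distrib_right intro!: sum.cong)
  also have "\<dots> = (\<Sum>p\<in>A \<times> B. if (\<lambda>(s,t). g s + g' t) p = x then (\<lambda>(s,t). w s * w' t) p else 0)"
    by (subst sum.cartesian_product) (auto intro!: sum.cong)
  finally show "conv (push A g w) (push B g' w') x = push (A \<times> B) (\<lambda>(s,t). g s + g' t) (\<lambda>(s,t). w s * w' t) x"
    unfolding push_def .
qed

lemma push_reindex:
  assumes "bij_betw f A B"
  shows "push B g w = push A (g \<circ> f) (w \<circ> f)"
proof
  fix u show "push B g w u = push A (g \<circ> f) (w \<circ> f) u"
    unfolding push_def comp_def using sum.reindex_bij_betw[OF assms, of "\<lambda>s. if g s = u then w s else 0", symmetric]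
    by simp
qed

lemma bij_upd:
  "bij_betw (\<lambda>(s, x). x(k := s)) (S \<times> PiE {..<k} (\<lambda>_. S)) (PiE {..<Suc k} (\<lambda>_. S))"
proof -
  have e: "{..<Suc k} = insert k {..<k}" by auto
  show ?thesis unfolding bij_betw_def e
    by (auto simp: PiE_insert_eq intro!: inj_combinator)
qed

lemma conv_pow_push:
  assumes "finite S"
  shows "conv_pow (push S g w) m =
    push (PiE {..<m} (\<lambda>_. S)) (\<lambda>x. \<Sum>j<m. g (x j)) (\<lambda>x. \<Prod>j<m. w (x j))"
proof (induction m)
  case 0
  then show ?case by (auto simp: push_def)
next
  case (Suc k)
  have fin: "finite (PiE {..<k} (\<lambda>_. S))" using assms by (simp add: finite_PiE)
  have "conv_pow (push S g w) (Suc k) =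
     push (S \<times> PiE {..<k} (\<lambda>_. S)) (\<lambda>(s,t). g s + (\<Sum>j<k. g (t j))) (\<lambda>(s,t). w s * (\<Prod>j<k. w (t j)))"
    using Suc by (simp add: conv_push[OF assms fin])
  also have "\<dots> = push (S \<times> PiE {..<k} (\<lambda>_. S))
     ((\<lambda>x. \<Sum>j<Suc k. g (x j)) \<circ> (\<lambda>(s, x). x(k := s))) ((\<lambda>x. \<Prod>j<Suc k. w (x j)) \<circ> (\<lambda>(s, x). x(k := s)))"
  proof -
    have a: "(\<lambda>(s,t). g s + (\<Sum>j<k. g (t j))) = (\<lambda>x. \<Sum>j<Suc k. g (x j)) \<circ> (\<lambda>(s, x). x(k := s))"
      by (auto simp: fun_eq_iff intro!: sum.cong)
    have b: "(\<lambda>(s,t). w s * (\<Prod>j<k. w (t j))) = (\<lambda>x. \<Prod>j<Suc k. w (x j)) \<circ> (\<lambda>(s, x). x(k := s))"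
      by (auto simp: fun_eq_iff intro!: prod.cong)
    show ?thesis by (simp only: a b)
  qed
  also have "\<dots> = push (PiE {..<Suc k} (\<lambda>_. S)) (\<lambda>x. \<Sum>j<Suc k. g (x j)) (\<lambda>x. \<Prod>j<Suc k. w (x j))"
    by (rule push_reindex[OF bij_upd, symmetric])
  finally show ?case .
qed

lemma T_encoding:
  assumes "finite A" "\<And>s. s \<in> A \<Longrightarrow> p s > 0" "\<And>s. s \<in> A \<Longrightarrow> q s > 0"
  shows "T_fun (push A (\<lambda>s. ln (p s / q s) / 2) (\<lambda>s. sqrt (p s * q s))) = TV A p q"
proof -
  have key: "\<bar>exp (ln (p s / q s) / 2) - exp (- (ln (p s / q s) / 2))\<bar> * sqrt (p s * q s) = \<bar>p s - q s\<bar>"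
    if "s \<in> A" for s
  proof -
    have p: "p s > 0" and q: "q s > 0" using assms that by auto
    have ex: "exp (ln x / 2) = sqrt x" if "x > 0" for x :: real
    proof -
      have "sqrt x = x powr (1/2)" using powr_half_sqrt[of x] that by simp
      also have "\<dots> = exp (ln x / 2)" unfolding powr_def using that by simp
      finally show ?thesis by simp
    qed
    define a where "a = sqrt (p s)"
    define b where "b = sqrt (q s)"
    have a: "a > 0" "p s = a^2" using p by (auto simp: a_def)
    have b: "b > 0" "q s = b^2" using q by (auto simp: b_def)
    have "exp (ln (p s / q s) / 2) = a / b"
      using p q by (simp add: ex a_def b_def real_sqrt_divide)
    moreover have "exp (- (ln (p s / q s) / 2)) = b / a"
    proof -
      have h: "- (ln (p s / q s) / 2) = ln (q s / p s) / 2"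
        using p q by (simp add: ln_div field_simps)
      show ?thesis unfolding h using p q by (simp add: ex a_def b_def real_sqrt_divide)
    qed
    moreover have "sqrt (p s * q s) = a * b" by (simp add: a_def b_def real_sqrt_mult)
    ultimately have "\<bar>exp (ln (p s / q s) / 2) - exp (- (ln (p s / q s) / 2))\<bar> * sqrt (p s * q s)
        = \<bar>a / b - b / a\<bar> * (a * b)" by simp
    also have "\<dots> = \<bar>(a / b - b / a) * (a * b)\<bar>" using a b by (simp add: abs_mult)
    also have "(a / b - b / a) * (a * b) = a^2 - b^2" using a b
      by (simp add: field_simps power2_eq_square)
    finally show ?thesis using a b by simp
  qed
  have "(\<Sum>s\<in>A. \<bar>exp (ln (p s / q s) / 2) - exp (- (ln (p s / q s) / 2))\<bar> * sqrt (p s * q s))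
      = (\<Sum>s\<in>A. \<bar>p s - q s\<bar>)"
    by (rule sum.cong[OF refl key])
  then show ?thesis
    unfolding T_fun_def TV_def sum_push[OF assms(1)] by simp
qed

lemma ln_div_pos: "(a::real) > 0 \<Longrightarrow> b > 0 \<Longrightarrow> ln (a / b) = ln a - ln b"
  by (simp add: ln_div)

lemma sqrt_prod: "sqrt (prod f A) = (\<Prod>x\<in>A. sqrt (f x))"
  by (induction A rule: infinite_finite_induct) (auto simp: real_sqrt_mult)

theorem theorem3:
  fixes \<Omega> :: "'a set" and n :: nat and P Q :: "nat \<Rightarrow> 'a \<Rightarrow> real"
  assumes "finite \<Omega>" and "n \<ge> 1"
    and "\<And>i. i \<in> {1..n} \<Longrightarrow> strictly_pos_pmf \<Omega> (P i)"
    and "\<And>i. i \<in> {1..n} \<Longrightarrow> strictly_pos_pmf \<Omega> (Q i)"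
  defines "\<Lambda>P \<equiv> (\<lambda>(i, \<omega>). P i \<omega> / real n)"
    and "\<Lambda>Q \<equiv> (\<lambda>(i, \<omega>). Q i \<omega> / real n)"
    and "\<eta>bar \<equiv> (\<lambda>u. (1 / real n) * (\<Sum>i=1..n. encoding \<Omega> (P i) (Q i) u))"
  shows "encoding ({1..n} \<times> \<Omega>) \<Lambda>P \<Lambda>Q = \<eta>bar \<and>
         T_fun (conv_pow \<eta>bar n) =
           TV (prod_space ({1..n} \<times> \<Omega>) n) (prod_pmf_pow \<Lambda>P n) (prod_pmf_pow \<Lambda>Q n)"
proof -
  define S where "S = {1..n} \<times> \<Omega>"
  have finS: "finite S" using assms(1) by (simp add: S_def)
  have npos: "real n > 0" using assms(2) by simp
  have Ppos: "\<Lambda>P p > 0" if pS: "p \<in> S" for p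
  proof -
    obtain i \<omega> where p: "p = (i, \<omega>)" "i \<in> {1..n}" "\<omega> \<in> \<Omega>" using pS unfolding S_def by blast
    have "P i \<omega> > 0" using assms(3)[OF p(2)] p(3) unfolding strictly_pos_pmf_def by blast
    then show ?thesis unfolding p(1) \<Lambda>P_def using npos by simp
  qed
  have Qpos: "\<Lambda>Q p > 0" if pS: "p \<in> S" for p
  proof -
    obtain i \<omega> where p: "p = (i, \<omega>)" "i \<in> {1..n}" "\<omega> \<in> \<Omega>" using pS unfolding S_def by blast
    have "Q i \<omega> > 0" using assms(4)[OF p(2)] p(3) unfolding strictly_pos_pmf_def by blast
    then show ?thesis unfolding p(1) \<Lambda>Q_def using npos by simp
  qed
  define g where "g p = ln (\<Lambda>P p / \<Lambda>Q p) / 2" for p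
  define w where "w p = sqrt (\<Lambda>P p * \<Lambda>Q p)" for p
  have enc: "encoding S \<Lambda>P \<Lambda>Q = push S g w"
    unfolding g_def w_def by (rule encoding_push[OF finS])
  have part1: "encoding S \<Lambda>P \<Lambda>Q = \<eta>bar"
  proof
    fix u
    have "encoding S \<Lambda>P \<Lambda>Q u = (\<Sum>i\<in>{1..n}. \<Sum>\<omega>\<in>\<Omega>. if g (i,\<omega>) = u then w (i,\<omega>) else 0)"
      unfolding enc push_def by (simp add: S_def sum.cartesian_product')
    also have "\<dots> = (\<Sum>i\<in>{1..n}. (1 / real n) * (\<Sum>\<omega>\<in>\<Omega>. if ln (P i \<omega> / Q i \<omega>) / 2 = u then sqrt (P i \<omega> * Q i \<omega>) else 0))"
    proof (intro sum.cong refl)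
      fix i assume "i \<in> {1..n}"
      have G1: "g (i,\<omega>) = ln (P i \<omega> / Q i \<omega>) / 2" for \<omega>
        unfolding g_def \<Lambda>P_def \<Lambda>Q_def using npos by simp
      have W1: "w (i,\<omega>) = (1 / real n) * sqrt (P i \<omega> * Q i \<omega>)" for \<omega>
      proof -
        have "P i \<omega> / real n * (Q i \<omega> / real n) = (P i \<omega> * Q i \<omega>) / (real n * real n)" by simp
        then show ?thesis unfolding w_def \<Lambda>P_def \<Lambda>Q_def using npos
          by (simp add: real_sqrt_divide real_sqrt_mult)
      qed
      show "(\<Sum>\<omega>\<in>\<Omega>. if g (i,\<omega>) = u then w (i,\<omega>) else 0) =
        (1 / real n) * (\<Sum>\<omega>\<in>\<Omega>. if ln (P i \<omega> / Q i \<omega>) / 2 = u then sqrt (P i \<omega> * Q i \<omega>) else 0)"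
        unfolding G1 W1 sum_distrib_left by (intro sum.cong refl) simp
    qed
    also have "\<dots> = \<eta>bar u"
      unfolding \<eta>bar_def sum_distrib_left using assms(1)
      by (intro sum.cong refl) (simp add: encoding_def sum.inter_filter sum_distrib_left)
    finally show "encoding S \<Lambda>P \<Lambda>Q u = \<eta>bar u" .
  qed
  define X where "X = PiE {..<n} (\<lambda>_. S)"
  have cp: "conv_pow \<eta>bar n = push X (\<lambda>x. \<Sum>j<n. g (x j)) (\<lambda>x. \<Prod>j<n. w (x j))"
    unfolding part1[symmetric] enc X_def by (rule conv_pow_push[OF finS])
  have cp2: "push X (\<lambda>x. \<Sum>j<n. g (x j)) (\<lambda>x. \<Prod>j<n. w (x j)) =
     push X (\<lambda>x. ln (prod_pmf_pow \<Lambda>P n x / prod_pmf_pow \<Lambda>Q n x) / 2)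
            (\<lambda>x. sqrt (prod_pmf_pow \<Lambda>P n x * prod_pmf_pow \<Lambda>Q n x))"
    unfolding push_def
  proof (intro ext sum.cong refl)
    fix u x assume x: "x \<in> X"
    then have xS: "x j \<in> S" if "j < n" for j using that by (auto simp: X_def)
    have pp: "\<Lambda>P (x j) > 0" "\<Lambda>Q (x j) > 0" if "j < n" for j using xS[OF that] Ppos Qpos by auto
    have "(\<Sum>j<n. g (x j)) = ((\<Sum>j<n. ln (\<Lambda>P (x j))) - (\<Sum>j<n. ln (\<Lambda>Q (x j)))) / 2"
    proof -
      have "(\<Sum>j<n. g (x j)) = (\<Sum>j<n. (ln (\<Lambda>P (x j)) - ln (\<Lambda>Q (x j))) / 2)"
      proof (rule sum.cong[OF refl])
        fix j assume "j \<in> {..<n}"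
        then have a: "\<Lambda>P (x j) > 0" "\<Lambda>Q (x j) > 0" using pp by auto
        show "g (x j) = (ln (\<Lambda>P (x j)) - ln (\<Lambda>Q (x j))) / 2"
          unfolding g_def using a by (simp add: ln_div)
      qed
      then show ?thesis by (simp only: sum_divide_distrib[symmetric] sum_subtractf)
    qed
    also have "\<dots> = ln (prod_pmf_pow \<Lambda>P n x / prod_pmf_pow \<Lambda>Q n x) / 2"
    proof -
      have nz1: "\<Lambda>P (x j) \<noteq> 0" if "j \<in> {..<n}" for j using pp(1)[of j] that by simp
      have l1: "ln (\<Prod>j<n. \<Lambda>P (x j)) = (\<Sum>j<n. ln (\<Lambda>P (x j)))"
        by (rule ln_prod[OF finite_lessThan nz1])
      have nz2: "\<Lambda>Q (x j) \<noteq> 0" if "j \<in> {..<n}" for j using pp(2)[of j] that by simp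
      have l2: "ln (\<Prod>j<n. \<Lambda>Q (x j)) = (\<Sum>j<n. ln (\<Lambda>Q (x j)))"
        by (rule ln_prod[OF finite_lessThan nz2])
      have p1: "(\<Prod>j<n. \<Lambda>P (x j)) > 0" by (rule prod_pos) (use pp in auto)
      have p2: "(\<Prod>j<n. \<Lambda>Q (x j)) > 0" by (rule prod_pos) (use pp in auto)
      have "ln ((\<Prod>j<n. \<Lambda>P (x j)) / (\<Prod>j<n. \<Lambda>Q (x j))) =
          ln (\<Prod>j<n. \<Lambda>P (x j)) - ln (\<Prod>j<n. \<Lambda>Q (x j))"
        by (rule ln_div_pos[OF p1 p2])
      then show ?thesis unfolding prod_pmf_pow_def l1 l2 by simp
    qed
    finally have G: "(\<Sum>j<n. g (x j)) = ln (prod_pmf_pow \<Lambda>P n x / prod_pmf_pow \<Lambda>Q n x) / 2" .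
    have W: "(\<Prod>j<n. w (x j)) = sqrt (prod_pmf_pow \<Lambda>P n x * prod_pmf_pow \<Lambda>Q n x)"
      unfolding w_def prod_pmf_pow_def by (simp only: prod.distrib[symmetric] sqrt_prod)
    show "(if (\<Sum>j<n. g (x j)) = u then \<Prod>j<n. w (x j) else 0) =
      (if ln (prod_pmf_pow \<Lambda>P n x / prod_pmf_pow \<Lambda>Q n x) / 2 = u
       then sqrt (prod_pmf_pow \<Lambda>P n x * prod_pmf_pow \<Lambda>Q n x) else 0)"
      by (simp only: G W)
  qed
  have finX: "finite X" unfolding X_def using finS by (simp add: finite_PiE)
  have pos1: "prod_pmf_pow \<Lambda>P n x > 0" "prod_pmf_pow \<Lambda>Q n x > 0" if "x \<in> X" for x
  proof -
    have xS: "x j \<in> S" if "j \<in> {..<n}" for j using that \<open>x \<in> X\<close> by (auto simp: X_def)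
    show "prod_pmf_pow \<Lambda>P n x > 0" unfolding prod_pmf_pow_def
      by (rule prod_pos) (use xS Ppos in blast)
    show "prod_pmf_pow \<Lambda>Q n x > 0" unfolding prod_pmf_pow_def
      by (rule prod_pos) (use xS Qpos in blast)
  qed
  have "T_fun (conv_pow \<eta>bar n) = TV X (prod_pmf_pow \<Lambda>P n) (prod_pmf_pow \<Lambda>Q n)"
    unfolding cp cp2 by (rule T_encoding[OF finX pos1])
  moreover have "prod_space ({1..n} \<times> \<Omega>) n = X" by (simp add: prod_space_def X_def S_def)
  ultimately show ?thesis using part1 unfolding S_def by simp
qed

end
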